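(* Let $\Theta$, $\mathtt{info}_K$, $\mathtt{good}_K$ and $\mathtt{max}_K$ (for $K\subseteq I$) be as in the context. For every model $\mathcal{M}=\langle W,V\rangle$, $w\in W$ and $X\subseteq W$: (1) for every $L\subseteq I$, if $\mathcal{M},w,X\vDash\mathtt{good}_L$ then $\llbracket\mathtt{info}_L\rrbracket^{\mathcal{M},X}$ is a $\Theta$-subset of $X$; (2) if $Y$ is a maximal $\Theta$-subset of $X$, then there is $K\subseteq I$ such that $Y=\llbracket\mathtt{info}_K\rrbracket^{\mathcal{M},X}$ and $\mathcal{M},w,X\vDash\mathtt{max}_K$; (3) for every $L\subseteq I$, if $\mathcal{M},w,X\vDash\mathtt{max}_L$ then $\llbracket\mathtt{info}_L\rrbracket^{\mathcal{M},X}$ is a maximal $\Theta$-subset of $X$.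
   Context: Formulas of the modal language $\mathcal{L}$: $\varphi::=p\mid\neg\varphi\mid(\varphi\wedge\varphi)\mid\Box\varphi$ with $\vee,\to$ as usual and $\Diamond\varphi:=\neg\Box\neg\varphi$; nonmodal formulas are those without $\Box$. A model is $\mathcal{M}=\langle W,V\rangle$, $W$ nonempty, $V(p)\subseteq W$. For $w\in W$, $X\subseteq W$: $\mathcal{M},w,X\vDash p$ iff $w\in V(p)$; $\neg,\wedge$ Boolean; $\mathcal{M},w,X\vDash\Box\varphi$ iff $\mathcal{M},v,X\vDash\varphi$ for all $v\in X$. $\llbracket\varphi\rrbracket^{\mathcal{M},Y}=\{v\in Y\mid\mathcal{M},v,Y\vDash\varphi\}$. Fix $\Theta=\bigvee_{i\in I}\theta_i$ with $I$ finite and $\theta_i=\varphi_i\wedge\Box\psi_i\wedge\bigwedge_{n\in D_i}\Diamond\chi_n$, where all $\varphi_i,\psi_i,\chi_n$ are nonmodal and each $D_i$ is a finite index set. For $K\subseteq I$: $\mathtt{info}_K:=(\bigvee_{k\in K}\varphi_k)\wedge\bigwedge_{k\in K}\psi_k$; $\mathtt{good}_K:=\bigwedge_{k\in K}\bigwedge_{n\in D_k}\Diamond(\mathtt{info}_K\wedge\chi_n)$; $\mathtt{max}_K:=\mathtt{good}_K\wedge\bigwedge_{L\subseteq I}\big((\Box(\mathtt{info}_K\to\mathtt{info}_L)\wedge\Diamond(\neg\mathtt{info}_K\wedge\mathtt{info}_L))\to\neg\mathtt{good}_L\big)$ (empty disjunction is $\bot$, empty conjunction is $\top$). A set $Y\subseteq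 X$ is a $\Theta$-subset of $X$ if $Y\subseteq\llbracket\Theta\rrbracket^{\mathcal{M},Y}$; it is a maximal $\Theta$-subset if no $\Theta$-subset $Z$ of $X$ satisfies $Y\subsetneq Z$. *)

theory Defs
  imports Main
begin

datatype 'p fm = Atom 'p | Neg "'p fm" | Conj "'p fm" "'p fm" | Box "'p fm"

definition Disj :: "'p fm \<Rightarrow> 'p fm \<Rightarrow> 'p fm" where
  "Disj a b = Neg (Conj (Neg a) (Neg b))"
definition Imp :: "'p fm \<Rightarrow> 'p fm \<Rightarrow> 'p fm" where
  "Imp a b = Neg (Conj a (Neg b))"
definition Dia :: "'p fm \<Rightarrow> 'p fm" where
  "Dia a = Neg (Box (Neg a))"
definition Top :: "'p fm" where
  "Top = Neg (Conj (Atom undefined) (Neg (Atom undefined)))"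
definition Bot :: "'p fm" where
  "Bot = Neg Top"

fun nonmodal :: "'p fm \<Rightarrow> bool" where
  "nonmodal (Atom p) = True"
| "nonmodal (Neg a) = nonmodal a"
| "nonmodal (Conj a b) = (nonmodal a \<and> nonmodal b)"
| "nonmodal (Box a) = False"

definition BigConj :: "'i set \<Rightarrow> ('i \<Rightarrow> 'p fm) \<Rightarrow> 'p fm" where
  "BigConj S f = foldr (\<lambda>x acc. Conj (f x) acc) (SOME xs. set xs = S \<and> distinct xs) Top"
definition BigDisj :: "'i set \<Rightarrow> ('i \<Rightarrow> 'p fm) \<Rightarrow> 'p fm" where
  "BigDisj S f = foldr (\<lambda>x acc. Disj (f x) acc) (SOME xs. set xs = S \<and> distinct xs) Bot"

fun sat :: "('p \<Rightarrow> 'w set) \<Rightarrow> 'w \<Rightarrow> 'w set \<Rightarrow> 'p fm \<Rightarrow> bool" where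
  "sat V w X (Atom p) = (w \<in> V p)"
| "sat V w X (Neg a) = (\<not> sat V w X a)"
| "sat V w X (Conj a b) = (sat V w X a \<and> sat V w X b)"
| "sat V w X (Box a) = (\<forall>v\<in>X. sat V v X a)"

definition ext :: "('p \<Rightarrow> 'w set) \<Rightarrow> 'w set \<Rightarrow> 'p fm \<Rightarrow> 'w set" where
  "ext V Y a = {v \<in> Y. sat V v Y a}"

definition theta :: "('i \<Rightarrow> 'p fm) \<Rightarrow> ('i \<Rightarrow> 'p fm) \<Rightarrow> ('i \<Rightarrow> 'n set) \<Rightarrow> ('n \<Rightarrow> 'p fm) \<Rightarrow> 'i \<Rightarrow> 'p fm" where
  "theta phi psi D chi i = Conj (phi i) (Conj (Box (psi i)) (BigConj (D i) (\<lambda>n. Dia (chi n))))"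

definition Theta :: "'i set \<Rightarrow> ('i \<Rightarrow> 'p fm) \<Rightarrow> ('i \<Rightarrow> 'p fm) \<Rightarrow> ('i \<Rightarrow> 'n set) \<Rightarrow> ('n \<Rightarrow> 'p fm) \<Rightarrow> 'p fm" where
  "Theta I phi psi D chi = BigDisj I (theta phi psi D chi)"

definition info :: "('i \<Rightarrow> 'p fm) \<Rightarrow> ('i \<Rightarrow> 'p fm) \<Rightarrow> 'i set \<Rightarrow> 'p fm" where
  "info phi psi K = Conj (BigDisj K phi) (BigConj K psi)"

definition good :: "('i \<Rightarrow> 'p fm) \<Rightarrow> ('i \<Rightarrow> 'p fm) \<Rightarrow> ('i \<Rightarrow> 'n set) \<Rightarrow> ('n \<Rightarrow> 'p fm) \<Rightarrow> 'i set \<Rightarrow> 'p fm" where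
  "good phi psi D chi K = BigConj K (\<lambda>k. BigConj (D k) (\<lambda>n. Dia (Conj (info phi psi K) (chi n))))"

definition maxf :: "'i set \<Rightarrow> ('i \<Rightarrow> 'p fm) \<Rightarrow> ('i \<Rightarrow> 'p fm) \<Rightarrow> ('i \<Rightarrow> 'n set) \<Rightarrow> ('n \<Rightarrow> 'p fm) \<Rightarrow> 'i set \<Rightarrow> 'p fm" where
  "maxf I phi psi D chi K = Conj (good phi psi D chi K)
     (BigConj (Pow I) (\<lambda>L. Imp (Conj (Box (Imp (info phi psi K) (info phi psi L)))
                                     (Dia (Conj (Neg (info phi psi K)) (info phi psi L))))
                               (Neg (good phi psi D chi L))))"

definition Theta_subset :: "('p \<Rightarrow> 'w set) \<Rightarrow> 'p fm \<Rightarrow> 'w set \<Rightarrow> 'w set \<Rightarrow> bool" where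
  "Theta_subset V Th X Y \<longleftrightarrow> Y \<subseteq> X \<and> Y \<subseteq> ext V Y Th"

definition max_Theta_subset :: "('p \<Rightarrow> 'w set) \<Rightarrow> 'p fm \<Rightarrow> 'w set \<Rightarrow> 'w set \<Rightarrow> bool" where
  "max_Theta_subset V Th X Y \<longleftrightarrow> Theta_subset V Th X Y \<and> \<not> (\<exists>Z. Theta_subset V Th X Z \<and> Y \<subset> Z)"

end

theory Submission
  imports Defs
begin

lemma sat_Top[simp]: "sat V w X Top" by (simp add: Top_def)
lemma sat_Bot[simp]: "\<not> sat V w X Bot" by (simp add: Bot_def)
lemma sat_Dia[simp]: "sat V w X (Dia a) = (\<exists>v\<in>X. sat V v X a)" by (simp add: Dia_def)
lemma sat_Imp[simp]: "sat V w X (Imp a b) = (sat V w X a \<longrightarrow> sat V w X b)" by (simp add: Imp_def)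
lemma sat_Disj[simp]: "sat V w X (Disj a b) = (sat V w X a \<or> sat V w X b)" by (simp add: Disj_def)

lemma sat_BigConj:
  assumes "finite S" shows "sat V w X (BigConj S f) = (\<forall>x\<in>S. sat V w X (f x))"
proof -
  let ?xs = "SOME xs. set xs = S \<and> distinct xs"
  have s: "set ?xs = S" using someI_ex[OF finite_distinct_list[OF assms]] by blast
  have "\<And>ys. sat V w X (foldr (\<lambda>x acc. Conj (f x) acc) ys Top) = (\<forall>x\<in>set ys. sat V w X (f x))"
    subgoal for ys by (induction ys) auto done
  then show ?thesis unfolding BigConj_def using s by simp
qed

lemma sat_BigDisj:
  assumes "finite S" shows "sat V w X (BigDisj S f) = (\<exists>x\<in>S. sat V w X (f x))"
proof -
  let ?xs = "SOME xs. set xs = S \<and> distinct xs"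
  have s: "set ?xs = S" using someI_ex[OF finite_distinct_list[OF assms]] by blast
  have "\<And>ys. sat V w X (foldr (\<lambda>x acc. Disj (f x) acc) ys Bot) = (\<exists>x\<in>set ys. sat V w X (f x))"
    subgoal for ys by (induction ys) auto done
  then show ?thesis unfolding BigDisj_def using s by simp
qed

lemma sat_nonmodal: "nonmodal a \<Longrightarrow> sat V w X a = sat V w Y a"
  by (induction a) auto

theorem lemma13:
  fixes I :: "'i set" and phi psi :: "'i \<Rightarrow> 'p fm" and D :: "'i \<Rightarrow> 'n set"
    and chi :: "'n \<Rightarrow> 'p fm" and W :: "'w set" and V :: "'p \<Rightarrow> 'w set"
    and w :: 'w and X :: "'w set"
  assumes "finite I"
    and "\<And>i. i \<in> I \<Longrightarrow> finite (D i)"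
    and "\<And>i. i \<in> I \<Longrightarrow> nonmodal (phi i) \<and> nonmodal (psi i)"
    and "\<And>i n. i \<in> I \<Longrightarrow> n \<in> D i \<Longrightarrow> nonmodal (chi n)"
    and "W \<noteq> {}" and "\<And>p. V p \<subseteq> W"
    and "w \<in> W" and "X \<subseteq> W"
  shows "(\<forall>L\<subseteq>I. sat V w X (good phi psi D chi L) \<longrightarrow>
            Theta_subset V (Theta I phi psi D chi) X (ext V X (info phi psi L)))
       \<and> (\<forall>Y. max_Theta_subset V (Theta I phi psi D chi) X Y \<longrightarrow>
            (\<exists>K\<subseteq>I. Y = ext V X (info phi psi K) \<and> sat V w X (maxf I phi psi D chi K)))
       \<and> (\<forall>L\<subseteq>I. sat V w X (maxf I phi psi D chi L) \<longrightarrow>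
            max_Theta_subset V (Theta I phi psi D chi) X (ext V X (info phi psi L)))"
proof -
  define P where "P i v = sat V v {} (phi i)" for i v
  define Q where "Q i v = sat V v {} (psi i)" for i v
  define C where "C n v = sat V v {} (chi n)" for n v
  define inf where "inf K v = ((\<exists>k\<in>K. P k v) \<and> (\<forall>k\<in>K. Q k v))" for K v
  have fK: "finite K" if "K \<subseteq> I" for K using that assms(1) finite_subset by blast
  have infoE: "sat V v Y (info phi psi K) = inf K v" if "K \<subseteq> I" for K Y v
  proof -
    have "sat V v Y (phi k) = P k v" "sat V v Y (psi k) = Q k v" if "k \<in> K" for k
      using that \<open>K \<subseteq> I\<close> assms(3) sat_nonmodal[of "phi k" V v Y "{}"] sat_nonmodal[of "psi k" V v Y "{}"]
      unfolding P_def Q_def by auto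
    then show ?thesis unfolding info_def inf_def using fK[OF that]
      by (simp add: sat_BigConj sat_BigDisj)
  qed
  have extE: "ext V X (info phi psi K) = {v\<in>X. inf K v}" if "K \<subseteq> I" for K
    using infoE[OF that] unfolding ext_def by auto
  have ThetaE: "sat V v Y (Theta I phi psi D chi) =
     (\<exists>i\<in>I. P i v \<and> (\<forall>u\<in>Y. Q i u) \<and> (\<forall>n\<in>D i. \<exists>u\<in>Y. C n u))" for Y v
  proof -
    have "sat V v Y (phi i) = P i v" "sat V u Y (psi i) = Q i u" if "i \<in> I" for i u
      using that assms(3) sat_nonmodal[of "phi i" V v Y "{}"] sat_nonmodal[of "psi i" V u Y "{}"]
      unfolding P_def Q_def by auto
    moreover have "sat V u Y (chi n) = C n u" if "i \<in> I" "n \<in> D i" for i n u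
      using that assms(4) sat_nonmodal[of "chi n" V u Y "{}"] unfolding C_def by auto
    ultimately show ?thesis unfolding Theta_def theta_def using assms(1,2)
      by (simp add: sat_BigConj sat_BigDisj)
  qed
  have goodE: "sat V v Y (good phi psi D chi K) =
      (\<forall>k\<in>K. \<forall>n\<in>D k. \<exists>u\<in>Y. inf K u \<and> C n u)" if "K \<subseteq> I" for K Y v
  proof -
    have "sat V u Y (chi n) = C n u" if "k \<in> K" "n \<in> D k" for k n u
      using that \<open>K \<subseteq> I\<close> assms(4) sat_nonmodal[of "chi n" V u Y "{}"] unfolding C_def by auto
    then show ?thesis unfolding good_def using fK[OF that] that assms(2) infoE[OF that]
      by (simp add: sat_BigConj subset_iff)
  qed
  have maxE: "sat V v X (maxf I phi psi D chi K) =
      ((\<forall>k\<in>K. \<forall>n\<in>D k. \<exists>u\<in>X. inf K u \<and> C n u) \<and>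
       (\<forall>L\<subseteq>I. ((\<forall>u\<in>X. inf K u \<longrightarrow> inf L u) \<and> (\<exists>u\<in>X. \<not> inf K u \<and> inf L u))
           \<longrightarrow> \<not> (\<forall>k\<in>L. \<forall>n\<in>D k. \<exists>u\<in>X. inf L u \<and> C n u)))" if "K \<subseteq> I" for K v
    unfolding maxf_def using assms(1) infoE[OF that] infoE goodE[OF that] goodE
    by (simp add: sat_BigConj Ball_def)
  have TS: "Theta_subset V (Theta I phi psi D chi) X Y =
     (Y \<subseteq> X \<and> (\<forall>v\<in>Y. \<exists>i\<in>I. P i v \<and> (\<forall>u\<in>Y. Q i u) \<and> (\<forall>n\<in>D i. \<exists>u\<in>Y. C n u)))" for Y
    unfolding Theta_subset_def ext_def ThetaE by auto
  define G where "G K = (\<forall>k\<in>K. \<forall>n\<in>D k. \<exists>u\<in>X. inf K u \<and> C n u)" for K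
  have one: "Theta_subset V (Theta I phi psi D chi) X {v\<in>X. inf L v}" if "L \<subseteq> I" "G L" for L
    unfolding TS
  proof (intro conjI ballI)
    fix v assume v: "v \<in> {v\<in>X. inf L v}"
    then obtain k where k: "k \<in> L" "P k v" unfolding inf_def by auto
    show "\<exists>i\<in>I. P i v \<and> (\<forall>u\<in>{v\<in>X. inf L v}. Q i u) \<and> (\<forall>n\<in>D i. \<exists>u\<in>{v\<in>X. inf L v}. C n u)"
      using k that unfolding G_def inf_def by blast
  qed auto
  have cover: "\<exists>K\<subseteq>I. Z \<subseteq> {v\<in>X. inf K v} \<and> G K" if "Theta_subset V (Theta I phi psi D chi) X Z" for Z
  proof -
    define K where "K = {i\<in>I. (\<forall>u\<in>Z. Q i u) \<and> (\<forall>n\<in>D i. \<exists>u\<in>Z. C n u)}"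
    have ZX: "Z \<subseteq> X" and Zt: "\<forall>v\<in>Z. \<exists>i\<in>I. P i v \<and> (\<forall>u\<in>Z. Q i u) \<and> (\<forall>n\<in>D i. \<exists>u\<in>Z. C n u)"
      using that TS by auto
    have sub: "Z \<subseteq> {v\<in>X. inf K v}"
    proof
      fix v assume "v \<in> Z"
      then show "v \<in> {v\<in>X. inf K v}" using ZX Zt unfolding inf_def K_def by blast
    qed
    have "G K" unfolding G_def
    proof (intro ballI)
      fix k n assume "k \<in> K" "n \<in> D k"
      then obtain u where "u \<in> Z" "C n u" unfolding K_def by blast
      then show "\<exists>u\<in>X. inf K u \<and> C n u" using sub by blast
    qed
    moreover have "K \<subseteq> I" unfolding K_def by blast
    ultimately show ?thesis using sub by blast
  qed
  show ?thesis
  proof (intro conjI allI impI)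
    fix L assume "L \<subseteq> I" "sat V w X (good phi psi D chi L)"
    then show "Theta_subset V (Theta I phi psi D chi) X (ext V X (info phi psi L))"
      using one[of L] goodE[of L w X] extE[of L] unfolding G_def by simp
  next
    fix Y assume m: "max_Theta_subset V (Theta I phi psi D chi) X Y"
    then have Yt: "Theta_subset V (Theta I phi psi D chi) X Y"
      and nz: "\<And>Z. Theta_subset V (Theta I phi psi D chi) X Z \<Longrightarrow> \<not> Y \<subset> Z"
      unfolding max_Theta_subset_def by auto
    obtain K where K: "K \<subseteq> I" "Y \<subseteq> {v\<in>X. inf K v}" "G K" using cover[OF Yt] by blast
    have eq: "Y = {v\<in>X. inf K v}" using nz[OF one[OF K(1,3)]] K(2) by blast
    have "\<not> G L" if L: "L \<subseteq> I" "(\<forall>u\<in>X. inf K u \<longrightarrow> inf L u) \<and> (\<exists>u\<in>X. \<not> inf K u \<and> inf L u)" for L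
    proof
      assume "G L"
      from nz[OF one[OF L(1) this]] show False using L(2) eq by blast
    qed
    then have "sat V w X (maxf I phi psi D chi K)"
      unfolding maxE[OF K(1)] using K(3) unfolding G_def by blast
    then show "\<exists>K\<subseteq>I. Y = ext V X (info phi psi K) \<and> sat V w X (maxf I phi psi D chi K)"
      using K(1) eq extE by blast
  next
    fix L assume L: "L \<subseteq> I" "sat V w X (maxf I phi psi D chi L)"
    have GL: "G L" and mx: "\<And>K. K \<subseteq> I \<Longrightarrow> (\<forall>u\<in>X. inf L u \<longrightarrow> inf K u) \<and> (\<exists>u\<in>X. \<not> inf L u \<and> inf K u) \<Longrightarrow> \<not> G K"
      using L(2) unfolding maxE[OF L(1)] G_def by blast+
    have "max_Theta_subset V (Theta I phi psi D chi) X {v\<in>X. inf L v}"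
      unfolding max_Theta_subset_def
    proof (intro conjI notI)
      show "Theta_subset V (Theta I phi psi D chi) X {v\<in>X. inf L v}" using one[OF L(1) GL] .
      assume "\<exists>Z. Theta_subset V (Theta I phi psi D chi) X Z \<and> {v\<in>X. inf L v} \<subset> Z"
      then obtain Z where Z: "Theta_subset V (Theta I phi psi D chi) X Z" "{v\<in>X. inf L v} \<subset> Z" by blast
      obtain K where K: "K \<subseteq> I" "Z \<subseteq> {v\<in>X. inf K v}" "G K" using cover[OF Z(1)] by blast
      have "(\<forall>u\<in>X. inf L u \<longrightarrow> inf K u) \<and> (\<exists>u\<in>X. \<not> inf L u \<and> inf K u)"
        using Z(2) K(2) by blast
      then show False using mx[OF K(1)] K(3) by blast
    qed
    then show "max_Theta_subset V (Theta I phi psi D chi) X (ext V X (info phi psi L))"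
      using extE[OF L(1)] by simp
  qed
qed

end
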